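(* For all (well-formed, possibly open) call-by-value $\lambda$-terms $t$ and $s$, $t \approx_{\mathrm{nf}} s$ if and only if there exists a natural number $n > \max(\mathrm{fv}(t)\cup\mathrm{fv}(s))$ such that $\langle t, [], n\rangle_{\mathrm{ev}} \approx \langle s, [], n\rangle_{\mathrm{ev}}$, where $\approx$ is machine bisimilarity for the call-by-value NFB machine.
   Context: Terms: $t,s ::= f \mid x \mid \lambda x.t \mid t\,s$ and values $v ::= f \mid \lambda x.t$, where $f$ ranges over free variables (identified with natural numbers) and $x$ over bound variables; terms are well formed (every $x$ bound); $\mathrm{fv}(t)$ is the set of free variables. Stacks: $\pi ::= [\mathrm{arg}\ t]::\pi \mid [\mathrm{fun}\ v]::\pi \mid []$. CK machine configurations $\langle t,\pi\rangle_{\mathrm{ev}}$, $\langle \pi, v\rangle_{\mathrm{cont}}$, transitions: $\langle t\,s, \pi\rangle_{\mathrm{ev}} \to \langle t, [\mathrm{arg}\ s]::\pi\rangle_{\mathrm{ev}}$; $\langle v,\pi\rangle_{\mathrm{ev}}\to\langle\pi,v\rangle_{\mathrm{cont}}$; $\langle [\mathrm{arg}\ t]::\pi, v\rangle_{\mathrm{cont}} \to \langle t, [\mathrm{fun}\ v]::\pi\rangle_{\mathrm{ev}}$; $\langle [\mathrm{fun}\ \lambda x.t]::\pi, v\rangle_{\mathrm{cont}}\to\langle t\{v/x\},\pi\rangle_{\mathrm{ev}}$; $\to^*$ is the reflexive transitive closure. Normal-form bisimulation: a symmetric relation $\mathcal R$ on CK configurations such that $C\mathcal RC'$ implies (1)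 if $C\to^*\langle [], v\rangle_{\mathrm{cont}}$ then there is $v'$ with $C'\to^*\langle[],v'\rangle_{\mathrm{cont}}$ and for all fresh $f$, $\langle[\mathrm{fun}\ v]::[], f\rangle_{\mathrm{cont}}\,\mathcal R\,\langle[\mathrm{fun}\ v']::[], f\rangle_{\mathrm{cont}}$; (2) if $C\to^*\langle[\mathrm{fun}\ f]::\pi, v\rangle_{\mathrm{cont}}$ then there are $\pi',v'$ with $C'\to^*\langle[\mathrm{fun}\ f]::\pi',v'\rangle_{\mathrm{cont}}$ and for all fresh $f'$, $\langle[\mathrm{fun}\ v]::[],f'\rangle_{\mathrm{cont}}\,\mathcal R\,\langle[\mathrm{fun}\ v']::[],f'\rangle_{\mathrm{cont}}$ and $\langle\pi,f'\rangle_{\mathrm{cont}}\,\mathcal R\,\langle\pi',f'\rangle_{\mathrm{cont}}$. $\approx_{\mathrm{nf}}$ is the largest normal-form bisimulation on configurations, extended to terms by $t\approx_{\mathrm{nf}}s$ iff $\langle t,[]\rangle_{\mathrm{ev}}\approx_{\mathrm{nf}}\langle s,[]\rangle_{\mathrm{ev}}$. Call-by-value NFB machine: configurations $\langle t,\pi,n\rangle_{\mathrm{ev}}$ and $\langle\pi,v,n\rangle_{\mathrm{cont}}$ ($n\in\mathbb N$), plus, for each $\pi$, $v$, $n$, an intermediate configuration $I(\pi,v,n)$. Transitions: $\langle t\,s,\pi,n\rangle_{\mathrm{ev}}\xrightarrow\tau\langle t,[\mathrm{arg}\ s]::\pi,n\rangle_{\mathrm{ev}}$; $\langle v,\pi,n\rangle_{\mathrm{ev}}\xrightarrow\tau\langle\pi,v,n\rangle_{\mathrm{cont}}$;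 $\langle[\mathrm{arg}\ t]::\pi,v,n\rangle_{\mathrm{cont}}\xrightarrow\tau\langle t,[\mathrm{fun}\ v]::\pi,n\rangle_{\mathrm{ev}}$; $\langle[\mathrm{fun}\ \lambda x.t]::\pi,v,n\rangle_{\mathrm{cont}}\xrightarrow\tau\langle t\{v/x\},\pi,n\rangle_{\mathrm{ev}}$; $\langle[],v,n\rangle_{\mathrm{cont}}\xrightarrow{\lambda}\langle[\mathrm{fun}\ v]::[],n,n+1\rangle_{\mathrm{cont}}$; $\langle[\mathrm{fun}\ f]::\pi,v,n\rangle_{\mathrm{cont}}\xrightarrow{f}I(\pi,v,n)$ (flag is the number $f$), and $I(\pi,v,n)\xrightarrow{\mathsf{val}}\langle[\mathrm{fun}\ v]::[],n,n+1\rangle_{\mathrm{cont}}$, $I(\pi,v,n)\xrightarrow{\mathsf{ctx}}\langle\pi,n,n+1\rangle_{\mathrm{cont}}$. Machine bisimulation: a symmetric relation $\mathcal R$ on configurations such that $C_1\mathcal RC_2$ implies, for every flag $F$: if $C_1\xrightarrow\tau^*\xrightarrow F C_1'$ then $C_2\xrightarrow\tau^*\xrightarrow FC_2'$ for some $C_2'$ with $C_1'\mathcal RC_2'$, and if $C_1\xrightarrow\tau^*\xrightarrow F$ by a terminating transition, then so does $C_2$. $\approx$ is the largest machine bisimulation. *)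

theory Defs
  imports Main
begin

section \<open>Terms (locally nameless: free variables are naturals, bound variables de Bruijn indices)\<close>

datatype tm = Fv nat | Bv nat | Lam tm | App tm tm

fun is_val :: "tm \<Rightarrow> bool" where
  "is_val (Fv f) = True"
| "is_val (Lam t) = True"
| "is_val _ = False"

fun lc_at :: "nat \<Rightarrow> tm \<Rightarrow> bool" where
  "lc_at k (Fv f) = True"
| "lc_at k (Bv i) = (i < k)"
| "lc_at k (Lam t) = lc_at (Suc k) t"
| "lc_at k (App t s) = (lc_at k t \<and> lc_at k s)"

definition wf_tm :: "tm \<Rightarrow> bool" where
  "wf_tm t = lc_at 0 t"

fun fv :: "tm \<Rightarrow> nat set" where
  "fv (Fv f) = {f}"
| "fv (Bv i) = {}"
| "fv (Lam t) = fv t"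
| "fv (App t s) = fv t \<union> fv s"

text \<open>opening: replace bound variable k by u (u is closed w.r.t. bound variables)\<close>
fun opn :: "nat \<Rightarrow> tm \<Rightarrow> tm \<Rightarrow> tm" where
  "opn k u (Fv f) = Fv f"
| "opn k u (Bv i) = (if i = k then u else Bv i)"
| "opn k u (Lam t) = Lam (opn (Suc k) u t)"
| "opn k u (App t s) = App (opn k u t) (opn k u s)"

text \<open>t{v/x} for the body t of Lam t\<close>
definition subst_body :: "tm \<Rightarrow> tm \<Rightarrow> tm" where
  "subst_body t v = opn 0 v t"

datatype frame = Arg tm | FunF tm   \<comment> \<open>FunF v: [fun v], v a value\<close>

type_synonym stack = "frame list"

fun fv_frame :: "frame \<Rightarrow> nat set" where
  "fv_frame (Arg t) = fv t"
| "fv_frame (FunF v) = fv v"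

definition fv_stack :: "stack \<Rightarrow> nat set" where
  "fv_stack \<pi> = (\<Union>fr\<in>set \<pi>. fv_frame fr)"

datatype ck = Ev tm stack | Cont stack tm

fun fv_ck :: "ck \<Rightarrow> nat set" where
  "fv_ck (Ev t \<pi>) = fv t \<union> fv_stack \<pi>"
| "fv_ck (Cont \<pi> v) = fv_stack \<pi> \<union> fv v"

inductive ck_step :: "ck \<Rightarrow> ck \<Rightarrow> bool" where
  ck_app: "ck_step (Ev (App t s) \<pi>) (Ev t (Arg s # \<pi>))"
| ck_val: "is_val v \<Longrightarrow> ck_step (Ev v \<pi>) (Cont \<pi> v)"
| ck_arg: "is_val v \<Longrightarrow> ck_step (Cont (Arg t # \<pi>) v) (Ev t (FunF v # \<pi>))"
| ck_beta: "is_val v \<Longrightarrow> ck_step (Cont (FunF (Lam t) # \<pi>) v) (Ev (subst_body t v) \<pi>)"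

abbreviation ck_steps :: "ck \<Rightarrow> ck \<Rightarrow> bool" where
  "ck_steps \<equiv> ck_step\<^sup>*\<^sup>*"

definition fresh_for :: "nat \<Rightarrow> ck \<Rightarrow> ck \<Rightarrow> bool" where
  "fresh_for f C C' \<longleftrightarrow> f \<notin> fv_ck C \<union> fv_ck C'"

definition nf_bisim :: "(ck \<Rightarrow> ck \<Rightarrow> bool) \<Rightarrow> bool" where
  "nf_bisim R \<longleftrightarrow> symp R \<and> (\<forall>C C'. R C C' \<longrightarrow>
     (\<forall>v. ck_steps C (Cont [] v) \<longrightarrow>
        (\<exists>v'. ck_steps C' (Cont [] v') \<and>
           (\<forall>f. fresh_for f (Cont [] v) (Cont [] v') \<longrightarrow>
              R (Cont [FunF v] (Fv f)) (Cont [FunF v'] (Fv f))))) \<and>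
     (\<forall>f \<pi> v. ck_steps C (Cont (FunF (Fv f) # \<pi>) v) \<longrightarrow>
        (\<exists>\<pi>' v'. ck_steps C' (Cont (FunF (Fv f) # \<pi>') v') \<and>
           (\<forall>f'. fresh_for f' (Cont (FunF (Fv f) # \<pi>) v) (Cont (FunF (Fv f) # \<pi>') v') \<longrightarrow>
              R (Cont [FunF v] (Fv f')) (Cont [FunF v'] (Fv f')) \<and>
              R (Cont \<pi> (Fv f')) (Cont \<pi>' (Fv f'))))))"

definition nf_bisimilar :: "ck \<Rightarrow> ck \<Rightarrow> bool" where
  "nf_bisimilar C C' \<longleftrightarrow> (\<exists>R. nf_bisim R \<and> R C C')"

definition nf_equiv :: "tm \<Rightarrow> tm \<Rightarrow> bool" where
  "nf_equiv t s \<longleftrightarrow> nf_bisimilar (Ev t []) (Ev s [])"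

datatype mconf = MEv tm stack nat | MCont stack tm nat | MInt stack tm nat

datatype flag = FlLam | FlVar nat | FlVal | FlCtx

inductive m_tau :: "mconf \<Rightarrow> mconf \<Rightarrow> bool" where
  m_app: "m_tau (MEv (App t s) \<pi> n) (MEv t (Arg s # \<pi>) n)"
| m_val: "is_val v \<Longrightarrow> m_tau (MEv v \<pi> n) (MCont \<pi> v n)"
| m_arg: "is_val v \<Longrightarrow> m_tau (MCont (Arg t # \<pi>) v n) (MEv t (FunF v # \<pi>) n)"
| m_beta: "is_val v \<Longrightarrow> m_tau (MCont (FunF (Lam t) # \<pi>) v n) (MEv (subst_body t v) \<pi> n)"

text \<open>flagged transitions; target None would be a terminating transition
  (the CBV NFB machine has none, so all targets are Some)\<close>
inductive m_flag :: "mconf \<Rightarrow> flag \<Rightarrow> mconf option \<Rightarrow> bool" where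
  m_lam: "is_val v \<Longrightarrow> m_flag (MCont [] v n) FlLam (Some (MCont [FunF v] (Fv n) (Suc n)))"
| m_var: "is_val v \<Longrightarrow> m_flag (MCont (FunF (Fv f) # \<pi>) v n) (FlVar f) (Some (MInt \<pi> v n))"
| m_ival: "m_flag (MInt \<pi> v n) FlVal (Some (MCont [FunF v] (Fv n) (Suc n)))"
| m_ictx: "m_flag (MInt \<pi> v n) FlCtx (Some (MCont \<pi> (Fv n) (Suc n)))"

definition machine_bisim :: "(mconf \<Rightarrow> mconf \<Rightarrow> bool) \<Rightarrow> bool" where
  "machine_bisim R \<longleftrightarrow> symp R \<and> (\<forall>C1 C2. R C1 C2 \<longrightarrow> (\<forall>F.
     (\<forall>D1 C1'. m_tau\<^sup>*\<^sup>* C1 D1 \<and> m_flag D1 F (Some C1') \<longrightarrow>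
        (\<exists>D2 C2'. m_tau\<^sup>*\<^sup>* C2 D2 \<and> m_flag D2 F (Some C2') \<and> R C1' C2')) \<and>
     ((\<exists>D1. m_tau\<^sup>*\<^sup>* C1 D1 \<and> m_flag D1 F None) \<longrightarrow>
        (\<exists>D2. m_tau\<^sup>*\<^sup>* C2 D2 \<and> m_flag D2 F None))))"

definition machine_bisimilar :: "mconf \<Rightarrow> mconf \<Rightarrow> bool" where
  "machine_bisimilar C1 C2 \<longleftrightarrow> (\<exists>R. machine_bisim R \<and> R C1 C2)"

end

theory Submission
  imports Defs
begin

fun rn :: "(nat \<Rightarrow> nat) \<Rightarrow> tm \<Rightarrow> tm" where
  "rn \<rho> (Fv f) = Fv (\<rho> f)"
| "rn \<rho> (Bv i) = Bv i"
| "rn \<rho> (Lam t) = Lam (rn \<rho> t)"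
| "rn \<rho> (App t s) = App (rn \<rho> t) (rn \<rho> s)"

fun rnf :: "(nat \<Rightarrow> nat) \<Rightarrow> frame \<Rightarrow> frame" where
  "rnf \<rho> (Arg t) = Arg (rn \<rho> t)"
| "rnf \<rho> (FunF t) = FunF (rn \<rho> t)"

fun rnm :: "(nat \<Rightarrow> nat) \<Rightarrow> mconf \<Rightarrow> mconf" where
  "rnm \<rho> (MEv t \<pi> c) = MEv (rn \<rho> t) (map (rnf \<rho>) \<pi>) (\<rho> c)"
| "rnm \<rho> (MCont \<pi> t c) = MCont (map (rnf \<rho>) \<pi>) (rn \<rho> t) (\<rho> c)"
| "rnm \<rho> (MInt \<pi> t c) = MInt (map (rnf \<rho>) \<pi>) (rn \<rho> t) (\<rho> c)"

fun rnF :: "(nat \<Rightarrow> nat) \<Rightarrow> flag \<Rightarrow> flag" where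
  "rnF \<rho> (FlVar f) = FlVar (\<rho> f)"
| "rnF \<rho> F = F"

fun ctr :: "mconf \<Rightarrow> nat" where
  "ctr (MEv t \<pi> c) = c"
| "ctr (MCont \<pi> t c) = c"
| "ctr (MInt \<pi> t c) = c"

fun finc :: "flag \<Rightarrow> nat" where
  "finc (FlVar f) = 0"
| "finc F = 1"

definition good :: "(nat \<Rightarrow> nat) \<Rightarrow> nat \<Rightarrow> bool" where
  "good \<rho> c \<longleftrightarrow> inj \<rho> \<and> (\<forall>i. \<rho> (c + i) = \<rho> c + i)"

lemma good_add: "good \<rho> c \<Longrightarrow> good \<rho> (c + k)"
  unfolding good_def by (metis add.assoc)

lemma good_Suc: "good \<rho> c \<Longrightarrow> \<rho> (Suc c) = Suc (\<rho> c)"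
  unfolding good_def by (metis add_Suc_right add_0_right)

lemma rn_opn: "rn \<rho> (opn k u t) = opn k (rn \<rho> u) (rn \<rho> t)"
  by (induction t arbitrary: k) auto

lemma is_val_rn[simp]: "is_val (rn \<rho> t) = is_val t"
  by (cases t) auto

lemma rn_eq_Fv[simp]: "rn \<rho> t = Fv f \<longleftrightarrow> (\<exists>g. t = Fv g \<and> f = \<rho> g)"
  by (cases t) auto
lemma rn_eq_Bv[simp]: "rn \<rho> t = Bv i \<longleftrightarrow> t = Bv i"
  by (cases t) auto
lemma rn_eq_Lam[simp]: "rn \<rho> t = Lam b \<longleftrightarrow> (\<exists>b'. t = Lam b' \<and> b = rn \<rho> b')"
  by (cases t) auto
lemma rn_eq_App[simp]: "rn \<rho> t = App a b \<longleftrightarrow> (\<exists>a' b'. t = App a' b' \<and> a = rn \<rho> a' \<and> b = rn \<rho> b')"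
  by (cases t) auto
lemma rnf_eq_Arg[simp]: "rnf \<rho> fr = Arg a \<longleftrightarrow> (\<exists>a'. fr = Arg a' \<and> a = rn \<rho> a')"
  by (cases fr) auto
lemma rnf_eq_FunF[simp]: "rnf \<rho> fr = FunF a \<longleftrightarrow> (\<exists>a'. fr = FunF a' \<and> a = rn \<rho> a')"
  by (cases fr) auto

lemma rn_eq_sym[simp]:
  "Fv f = rn \<rho> t \<longleftrightarrow> rn \<rho> t = Fv f"
  "Bv i = rn \<rho> t \<longleftrightarrow> rn \<rho> t = Bv i"
  "Lam b = rn \<rho> t \<longleftrightarrow> rn \<rho> t = Lam b"
  "App a b = rn \<rho> t \<longleftrightarrow> rn \<rho> t = App a b"
  "Arg a = rnf \<rho> fr \<longleftrightarrow> rnf \<rho> fr = Arg a"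
  "FunF a = rnf \<rho> fr \<longleftrightarrow> rnf \<rho> fr = FunF a"
  by (rule eq_commute)+

lemma rn_subst: "rn \<rho> (subst_body t v) = subst_body (rn \<rho> t) (rn \<rho> v)"
  by (simp add: subst_body_def rn_opn)

lemma rnm_eq_MEv[simp]: "rnm \<rho> M = MEv t \<pi> c \<longleftrightarrow> (\<exists>t' \<pi>' c'. M = MEv t' \<pi>' c' \<and> t = rn \<rho> t' \<and> \<pi> = map (rnf \<rho>) \<pi>' \<and> c = \<rho> c')"
  by (cases M) auto
lemma rnm_eq_MCont[simp]: "rnm \<rho> M = MCont \<pi> t c \<longleftrightarrow> (\<exists>t' \<pi>' c'. M = MCont \<pi>' t' c' \<and> t = rn \<rho> t' \<and> \<pi> = map (rnf \<rho>) \<pi>' \<and> c = \<rho> c')"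
  by (cases M) auto
lemma rnm_eq_MInt[simp]: "rnm \<rho> M = MInt \<pi> t c \<longleftrightarrow> (\<exists>t' \<pi>' c'. M = MInt \<pi>' t' c' \<and> t = rn \<rho> t' \<and> \<pi> = map (rnf \<rho>) \<pi>' \<and> c = \<rho> c')"
  by (cases M) auto

lemma tau_push: "m_tau M N \<Longrightarrow> m_tau (rnm \<rho> M) (rnm \<rho> N)"
  by (induction rule: m_tau.induct) (auto intro: m_tau.intros simp: rn_subst)

lemma tau_det: "m_tau X Y \<Longrightarrow> m_tau X Z \<Longrightarrow> Y = Z"
  by (induction rule: m_tau.induct) (auto elim: m_tau.cases)

lemma tau_ex: "m_tau (rnm \<rho> M) Y \<Longrightarrow> \<exists>N. m_tau M N"
  by (erule m_tau.cases) (auto, (metis m_tau.intros)+)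

lemma tau_pull: "m_tau (rnm \<rho> M) Y \<Longrightarrow> \<exists>N. m_tau M N \<and> Y = rnm \<rho> N"
  by (meson tau_det tau_ex tau_push)

lemma taus_pull: "m_tau\<^sup>*\<^sup>* X Y \<Longrightarrow> X = rnm \<rho> M \<Longrightarrow> \<exists>N. m_tau\<^sup>*\<^sup>* M N \<and> Y = rnm \<rho> N"
proof (induction rule: rtranclp_induct)
  case base then show ?case by auto
next
  case (step y z)
  then obtain N where "m_tau\<^sup>*\<^sup>* M N" "y = rnm \<rho> N" by auto
  with step tau_pull[of \<rho> N z] show ?case by (meson rtranclp.rtrancl_into_rtrancl)
qed

lemma taus_push: "m_tau\<^sup>*\<^sup>* M N \<Longrightarrow> m_tau\<^sup>*\<^sup>* (rnm \<rho> M) (rnm \<rho> N)"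
  by (induction rule: rtranclp_induct) (auto intro: rtranclp.rtrancl_into_rtrancl tau_push)

lemma tau_ctr: "m_tau M N \<Longrightarrow> ctr N = ctr M"
  by (induction rule: m_tau.induct) auto

lemma taus_ctr: "m_tau\<^sup>*\<^sup>* M N \<Longrightarrow> ctr N = ctr M"
  by (induction rule: rtranclp_induct) (auto dest: tau_ctr)

lemma flag_none: "\<not> m_flag X F None"
  by (auto elim: m_flag.cases)

lemma flag_ctr: "m_flag N F (Some Z) \<Longrightarrow> ctr Z = ctr N + finc F"
  by (erule m_flag.cases) auto

lemma flag_push: "m_flag N F (Some Z) \<Longrightarrow> good \<rho> (ctr N) \<Longrightarrow> m_flag (rnm \<rho> N) (rnF \<rho> F) (Some (rnm \<rho> Z))"
  by (erule m_flag.cases) (auto simp: good_Suc intro: m_flag.intros)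

lemma flag_pull: "m_flag (rnm \<rho> N) F (Some Z) \<Longrightarrow> good \<rho> (ctr N) \<Longrightarrow>
   \<exists>F0 Z0. m_flag N F0 (Some Z0) \<and> F = rnF \<rho> F0 \<and> Z = rnm \<rho> Z0"
  apply (erule m_flag.cases)
  apply (auto simp: good_Suc)
  apply ((intro exI conjI, rule m_flag.intros; (simp add: good_Suc; fail)))+
  done


lemma mb_sym: "machine_bisimilar A B \<Longrightarrow> machine_bisimilar B A"
proof -
  assume "machine_bisimilar A B"
  then obtain R where R: "machine_bisim R" "R A B" unfolding machine_bisimilar_def by blast
  have "symp R" using R(1) unfolding machine_bisim_def by (rule conjunct1)
  then have "R B A" using R(2) by (rule sympD)
  then show ?thesis using R(1) unfolding machine_bisimilar_def by blast
qed

lemma mb_step: "machine_bisimilar C1 C2 \<Longrightarrow> m_tau\<^sup>*\<^sup>* C1 D1 \<Longrightarrow> m_flag D1 F (Some C1') \<Longrightarrow>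
   \<exists>D2 C2'. m_tau\<^sup>*\<^sup>* C2 D2 \<and> m_flag D2 F (Some C2') \<and> machine_bisimilar C1' C2'"
proof -
  assume a: "machine_bisimilar C1 C2" "m_tau\<^sup>*\<^sup>* C1 D1" "m_flag D1 F (Some C1')"
  obtain R where R: "machine_bisim R" "R C1 C2" using a(1) unfolding machine_bisimilar_def by blast
  note H = R(1)[unfolded machine_bisim_def, THEN conjunct2, THEN spec, THEN spec, THEN mp, OF R(2),
     THEN spec[of _ F], THEN conjunct1, THEN spec, THEN spec, THEN mp]
  obtain D2 C2' where "m_tau\<^sup>*\<^sup>* C2 D2" "m_flag D2 F (Some C2')" "R C1' C2'"
    using H[OF conjI[OF a(2) a(3)]] by blast
  then show ?thesis using R(1) unfolding machine_bisimilar_def by blast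
qed

lemma mb_rename:
  assumes "machine_bisimilar M1 M2" "ctr M1 = c" "ctr M2 = c" "good \<rho> c"
  shows "machine_bisimilar (rnm \<rho> M1) (rnm \<rho> M2)"
proof -
  define R where "R X1 X2 \<longleftrightarrow> (\<exists>M1 M2 c. X1 = rnm \<rho> M1 \<and> X2 = rnm \<rho> M2 \<and>
      machine_bisimilar M1 M2 \<and> ctr M1 = c \<and> ctr M2 = c \<and> good \<rho> c)" for X1 X2
  have "machine_bisim R"
    unfolding machine_bisim_def
  proof (intro conjI allI impI)
    show "symp R"
    proof (rule sympI)
      fix x y assume "R x y"
      then obtain M1 M2 c where "x = rnm \<rho> M1" "y = rnm \<rho> M2" "machine_bisimilar M1 M2"
        "ctr M1 = c" "ctr M2 = c" "good \<rho> c" unfolding R_def by blast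
      then show "R y x" unfolding R_def using mb_sym by blast
    qed
  next
    fix C1 C2 F D1 C1'
    assume "R C1 C2" and st: "m_tau\<^sup>*\<^sup>* C1 D1 \<and> m_flag D1 F (Some C1')"
    then obtain N1 N2 c where C: "C1 = rnm \<rho> N1" "C2 = rnm \<rho> N2" "machine_bisimilar N1 N2"
      "ctr N1 = c" "ctr N2 = c" "good \<rho> c" unfolding R_def by blast
    obtain E1 where E1: "m_tau\<^sup>*\<^sup>* N1 E1" "D1 = rnm \<rho> E1" using taus_pull st C by blast
    have cE1: "ctr E1 = c" using taus_ctr E1 C by auto
    obtain F0 Z0 where Z0: "m_flag E1 F0 (Some Z0)" "F = rnF \<rho> F0" "C1' = rnm \<rho> Z0"
      using flag_pull[of \<rho> E1 F C1'] st E1 cE1 C by auto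
    obtain E2 Z2 where E2: "m_tau\<^sup>*\<^sup>* N2 E2" "m_flag E2 F0 (Some Z2)" "machine_bisimilar Z0 Z2"
      using mb_step[OF C(3) E1(1) Z0(1)] by blast
    have cE2: "ctr E2 = c" using taus_ctr E2 C by auto
    have "m_tau\<^sup>*\<^sup>* C2 (rnm \<rho> E2)" using taus_push E2 C by auto
    moreover have "m_flag (rnm \<rho> E2) F (Some (rnm \<rho> Z2))"
      using flag_push[OF E2(2)] cE2 C Z0 by auto
    moreover have "R C1' (rnm \<rho> Z2)"
      unfolding R_def using Z0 E2 flag_ctr[OF Z0(1)] flag_ctr[OF E2(2)] cE1 cE2 good_add[OF C(6)]
      by metis
    ultimately show "\<exists>D2 C2'. m_tau\<^sup>*\<^sup>* C2 D2 \<and> m_flag D2 F (Some C2') \<and> R C1' C2'" by blast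
  next
    fix C1 C2 F
    assume "\<exists>D1. m_tau\<^sup>*\<^sup>* C1 D1 \<and> m_flag D1 F None"
    then show "\<exists>D2. m_tau\<^sup>*\<^sup>* C2 D2 \<and> m_flag D2 F None" using flag_none by blast
  qed
  moreover have "R (rnm \<rho> M1) (rnm \<rho> M2)" unfolding R_def using assms by blast
  ultimately show ?thesis unfolding machine_bisimilar_def by blast
qed

fun lift :: "ck \<Rightarrow> nat \<Rightarrow> mconf" where
  "lift (Ev t \<pi>) c = MEv t \<pi> c"
| "lift (Cont \<pi> v) c = MCont \<pi> v c"

fun okc :: "ck \<Rightarrow> bool" where
  "okc (Ev t \<pi>) = True"
| "okc (Cont \<pi> v) = is_val v"

lemma ck_push: "ck_step A B \<Longrightarrow> m_tau (lift A c) (lift B c)"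
  by (induction rule: ck_step.induct) (auto intro: m_tau.intros)

lemma ck_pull: "m_tau (lift A c) Y \<Longrightarrow> \<exists>B. Y = lift B c \<and> ck_step A B"
  apply (cases A)
   apply (auto elim!: m_tau.cases)
  apply (metis lift.simps ck_step.intros)+
  done

lemma cks_push: "ck_steps A B \<Longrightarrow> m_tau\<^sup>*\<^sup>* (lift A c) (lift B c)"
  by (induction rule: rtranclp_induct) (auto intro: rtranclp.rtrancl_into_rtrancl ck_push)

lemma cks_pull: "m_tau\<^sup>*\<^sup>* X Y \<Longrightarrow> X = lift A c \<Longrightarrow> \<exists>B. Y = lift B c \<and> ck_steps A B"
proof (induction rule: rtranclp_induct)
  case base then show ?case by auto
next
  case (step y z)
  then obtain B where "y = lift B c" "ck_steps A B" by auto
  with step ck_pull[of B c z] show ?case by (meson rtranclp.rtrancl_into_rtrancl)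
qed

lemma ok_step: "ck_step A B \<Longrightarrow> okc B"
  by (induction rule: ck_step.induct) auto

lemma ok_steps: "ck_steps A B \<Longrightarrow> okc A \<Longrightarrow> okc B"
  by (induction rule: rtranclp_induct) (auto dest: ok_step)

lemma fv_opn: "fv (opn k u t) \<subseteq> fv u \<union> fv t"
  by (induction t arbitrary: k) auto

lemma fv_step: "ck_step A B \<Longrightarrow> fv_ck B \<subseteq> fv_ck A"
  by (induction rule: ck_step.induct) (use fv_opn in \<open>auto simp: fv_stack_def subst_body_def\<close>)

lemma fv_steps: "ck_steps A B \<Longrightarrow> fv_ck B \<subseteq> fv_ck A"
  by (induction rule: rtranclp_induct) (auto dest: fv_step)

lemma flag_lift: "m_flag (lift A c) F (Some Z) \<Longrightarrow>
   (\<exists>v. A = Cont [] v \<and> is_val v \<and> F = FlLam \<and> Z = MCont [FunF v] (Fv c) (Suc c)) \<or>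
   (\<exists>f \<pi> v. A = Cont (FunF (Fv f) # \<pi>) v \<and> is_val v \<and> F = FlVar f \<and> Z = MInt \<pi> v c)"
  by (cases A) (auto elim: m_flag.cases)

lemma flag_int: "m_flag (MInt \<pi> v c) F (Some Z) \<Longrightarrow>
   (F = FlVal \<and> Z = MCont [FunF v] (Fv c) (Suc c)) \<or> (F = FlCtx \<and> Z = MCont \<pi> (Fv c) (Suc c))"
  by (auto elim: m_flag.cases)

lemma taus_int: "m_tau\<^sup>*\<^sup>* X Y \<Longrightarrow> X = MInt \<pi> v c \<Longrightarrow> Y = X"
  by (induction rule: rtranclp_induct) (auto elim: m_tau.cases)

lemma rn_fix: "(\<forall>x\<in>fv t. \<rho> x = x) \<Longrightarrow> rn \<rho> t = t"
  by (induction t) auto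

lemma rns_fix: "(\<forall>x\<in>fv_stack \<pi>. \<rho> x = x) \<Longrightarrow> map (rnf \<rho>) \<pi> = \<pi>"
proof (induction \<pi>)
  case (Cons a \<pi>) then show ?case by (cases a) (auto simp: fv_stack_def rn_fix)
qed simp

lemma rho_exists:
  assumes "S \<subseteq> {..<c}" "f \<notin> S"
  shows "\<exists>\<rho>. good \<rho> (Suc c) \<and> \<rho> c = f \<and> (\<forall>x\<in>S. \<rho> x = x) \<and> c < \<rho> (Suc c) \<and> f < \<rho> (Suc c)"
proof -
  define \<rho> where "\<rho> x = (if x = c then f else if x < c then (if x = f then c else x)
                  else x - Suc c + Suc (max c f))" for x
  have "inj \<rho>" unfolding inj_def \<rho>_def by (auto split: if_splits)
  moreover have "\<forall>i. \<rho> (Suc c + i) = \<rho> (Suc c) + i" unfolding \<rho>_def by auto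
  ultimately have "good \<rho> (Suc c)" unfolding good_def by auto
  moreover have "\<forall>x\<in>S. \<rho> x = x" using assms unfolding \<rho>_def by auto
  moreover have "\<rho> c = f" "\<rho> (Suc c) = Suc (max c f)" unfolding \<rho>_def by auto
  ultimately show ?thesis by (intro exI[of _ \<rho>]) auto
qed


lemma nfb_sym: "nf_bisimilar A B \<Longrightarrow> nf_bisimilar B A"
proof -
  assume "nf_bisimilar A B"
  then obtain R where R: "nf_bisim R" "R A B" unfolding nf_bisimilar_def by blast
  have "symp R" using R(1) unfolding nf_bisim_def by (rule conjunct1)
  then have "R B A" using R(2) by (rule sympD)
  then show ?thesis using R(1) unfolding nf_bisimilar_def by blast
qed

lemma nfb_c1:
  assumes "nf_bisimilar C C'" "ck_steps C (Cont [] v)"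
  shows "\<exists>v'. ck_steps C' (Cont [] v') \<and> (\<forall>f. fresh_for f (Cont [] v) (Cont [] v') \<longrightarrow>
            nf_bisimilar (Cont [FunF v] (Fv f)) (Cont [FunF v'] (Fv f)))"
proof -
  obtain R where R: "nf_bisim R" "R C C'" using assms(1) unfolding nf_bisimilar_def by blast
  note H = R(1)[unfolded nf_bisim_def, THEN conjunct2, THEN spec, THEN spec, THEN mp, OF R(2),
     THEN conjunct1, THEN spec, THEN mp, OF assms(2)]
  then obtain v' where "ck_steps C' (Cont [] v')" "\<forall>f. fresh_for f (Cont [] v) (Cont [] v') \<longrightarrow>
              R (Cont [FunF v] (Fv f)) (Cont [FunF v'] (Fv f))" by blast
  then show ?thesis using R(1) unfolding nf_bisimilar_def by blast
qed

lemma nfb_c2: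
  assumes "nf_bisimilar C C'" "ck_steps C (Cont (FunF (Fv f) # \<pi>) v)"
  shows "\<exists>\<pi>' v'. ck_steps C' (Cont (FunF (Fv f) # \<pi>') v') \<and>
           (\<forall>f'. fresh_for f' (Cont (FunF (Fv f) # \<pi>) v) (Cont (FunF (Fv f) # \<pi>') v') \<longrightarrow>
              nf_bisimilar (Cont [FunF v] (Fv f')) (Cont [FunF v'] (Fv f')) \<and>
              nf_bisimilar (Cont \<pi> (Fv f')) (Cont \<pi>' (Fv f')))"
proof -
  obtain R where R: "nf_bisim R" "R C C'" using assms(1) unfolding nf_bisimilar_def by blast
  note H = R(1)[unfolded nf_bisim_def, THEN conjunct2, THEN spec, THEN spec, THEN mp, OF R(2),
     THEN conjunct2, THEN spec, THEN spec, THEN spec, THEN mp, OF assms(2)]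
  then obtain \<pi>' v' where "ck_steps C' (Cont (FunF (Fv f) # \<pi>') v')"
     "\<forall>f'. fresh_for f' (Cont (FunF (Fv f) # \<pi>) v) (Cont (FunF (Fv f) # \<pi>') v') \<longrightarrow>
              R (Cont [FunF v] (Fv f')) (Cont [FunF v'] (Fv f')) \<and>
              R (Cont \<pi> (Fv f')) (Cont \<pi>' (Fv f'))" by blast
  then show ?thesis using R(1) unfolding nf_bisimilar_def by blast
qed

lemma fv_stack_simps[simp]: "fv_stack [] = {}" "fv_stack (x # \<pi>) = fv_frame x \<union> fv_stack \<pi>"
  by (auto simp: fv_stack_def)

definition SA :: "mconf \<Rightarrow> mconf \<Rightarrow> bool" where
  "SA M1 M2 \<longleftrightarrow> (\<exists>c. (\<exists>A B. M1 = lift A c \<and> M2 = lift B c \<and> fv_ck A \<subseteq> {..<c} \<and> fv_ck B \<subseteq> {..<c}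
      \<and> okc A \<and> okc B \<and> nf_bisimilar A B) \<or>
     (\<exists>\<pi> v \<pi>' v'. M1 = MInt \<pi> v c \<and> M2 = MInt \<pi>' v' c \<and> fv_stack \<pi> \<union> fv v \<subseteq> {..<c}
      \<and> fv_stack \<pi>' \<union> fv v' \<subseteq> {..<c} \<and> nf_bisimilar (Cont [FunF v] (Fv c)) (Cont [FunF v'] (Fv c))
      \<and> nf_bisimilar (Cont \<pi> (Fv c)) (Cont \<pi>' (Fv c))))"

lemma SA_lift_step:
  assumes nb: "nf_bisimilar A B" and ok: "okc A" "okc B" and fvA: "fv_ck A \<subseteq> {..<c}"
    and fvB: "fv_ck B \<subseteq> {..<c}"
    and st: "m_tau\<^sup>*\<^sup>* (lift A c) D1" "m_flag D1 F (Some C1')"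
  shows "\<exists>D2 C2'. m_tau\<^sup>*\<^sup>* (lift B c) D2 \<and> m_flag D2 F (Some C2') \<and> SA C1' C2'"
proof -
  obtain A' where A': "D1 = lift A' c" "ck_steps A A'" using cks_pull[OF st(1)] by blast
  have fvA': "fv_ck A' \<subseteq> {..<c}" using fv_steps[OF A'(2)] fvA by blast
  have "m_flag (lift A' c) F (Some C1')" using st(2) A'(1) by simp
  from flag_lift[OF this] show ?thesis
  proof (elim disjE exE conjE)
    fix v assume h: "A' = Cont [] v" "is_val v" "F = FlLam" "C1' = MCont [FunF v] (Fv c) (Suc c)"
    obtain v' where v': "ck_steps B (Cont [] v')" "\<forall>f. fresh_for f (Cont [] v) (Cont [] v') \<longrightarrow>
            nf_bisimilar (Cont [FunF v] (Fv f)) (Cont [FunF v'] (Fv f))"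
      using nfb_c1[OF nb] A'(2) h(1) by blast
    have iv: "is_val v'" using ok_steps[OF v'(1) ok(2)] by simp
    have fvv': "fv v' \<subseteq> {..<c}" using fv_steps[OF v'(1)] fvB by auto
    have fvv: "fv v \<subseteq> {..<c}" using fvA' h by auto
    have "fresh_for c (Cont [] v) (Cont [] v')" unfolding fresh_for_def using fvv fvv' by auto
    then have nb2: "nf_bisimilar (Cont [FunF v] (Fv c)) (Cont [FunF v'] (Fv c))" using v'(2) by blast
    have "m_tau\<^sup>*\<^sup>* (lift B c) (MCont [] v' c)" using cks_push[OF v'(1), of c] by simp
    moreover have "m_flag (MCont [] v' c) F (Some (MCont [FunF v'] (Fv c) (Suc c)))"
      using h iv by (auto intro: m_flag.intros)
    moreover have "SA C1' (MCont [FunF v'] (Fv c) (Suc c))"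
      unfolding SA_def
      apply (rule exI[of _ "Suc c"], rule disjI1)
      apply (rule exI[of _ "Cont [FunF v] (Fv c)"], rule exI[of _ "Cont [FunF v'] (Fv c)"])
      using h nb2 fvv fvv' by auto
    ultimately show ?thesis by blast
  next
    fix f \<pi> v assume h: "A' = Cont (FunF (Fv f) # \<pi>) v" "is_val v" "F = FlVar f" "C1' = MInt \<pi> v c"
    obtain \<pi>' v' where v': "ck_steps B (Cont (FunF (Fv f) # \<pi>') v')"
           "\<forall>f'. fresh_for f' (Cont (FunF (Fv f) # \<pi>) v) (Cont (FunF (Fv f) # \<pi>') v') \<longrightarrow>
              nf_bisimilar (Cont [FunF v] (Fv f')) (Cont [FunF v'] (Fv f')) \<and>
              nf_bisimilar (Cont \<pi> (Fv f')) (Cont \<pi>' (Fv f'))"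
      using nfb_c2[OF nb] A'(2) h(1) by blast
    have iv: "is_val v'" using ok_steps[OF v'(1) ok(2)] by simp
    have fvv': "fv_ck (Cont (FunF (Fv f) # \<pi>') v') \<subseteq> {..<c}" using fv_steps[OF v'(1)] fvB by auto
    have fvv: "fv_ck (Cont (FunF (Fv f) # \<pi>) v) \<subseteq> {..<c}" using fvA' h by auto
    have "fresh_for c (Cont (FunF (Fv f) # \<pi>) v) (Cont (FunF (Fv f) # \<pi>') v')"
      unfolding fresh_for_def using fvv fvv' by auto
    then have nb2: "nf_bisimilar (Cont [FunF v] (Fv c)) (Cont [FunF v'] (Fv c))"
       "nf_bisimilar (Cont \<pi> (Fv c)) (Cont \<pi>' (Fv c))" using v'(2) by blast+
    have "m_tau\<^sup>*\<^sup>* (lift B c) (MCont (FunF (Fv f) # \<pi>') v' c)" using cks_push[OF v'(1), of c] by simp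
    moreover have "m_flag (MCont (FunF (Fv f) # \<pi>') v' c) F (Some (MInt \<pi>' v' c))"
      using h iv by (auto intro: m_flag.intros)
    moreover have "SA C1' (MInt \<pi>' v' c)"
      unfolding SA_def
      apply (rule exI[of _ c], rule disjI2)
      using h nb2 fvv fvv' by auto
    ultimately show ?thesis by blast
  qed
qed

lemma SA_int_step:
  assumes nb: "nf_bisimilar (Cont [FunF v] (Fv c)) (Cont [FunF v'] (Fv c))"
     "nf_bisimilar (Cont \<pi> (Fv c)) (Cont \<pi>' (Fv c))"
    and fv: "fv_stack \<pi> \<union> fv v \<subseteq> {..<c}" "fv_stack \<pi>' \<union> fv v' \<subseteq> {..<c}"
    and st: "m_tau\<^sup>*\<^sup>* (MInt \<pi> v c) D1" "m_flag D1 F (Some C1')"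
  shows "\<exists>D2 C2'. m_tau\<^sup>*\<^sup>* (MInt \<pi>' v' c) D2 \<and> m_flag D2 F (Some C2') \<and> SA C1' C2'"
proof -
  have D1: "D1 = MInt \<pi> v c" using taus_int[OF st(1)] by simp
  have "m_flag (MInt \<pi> v c) F (Some C1')" using st(2) D1 by simp
  from flag_int[OF this] show ?thesis
  proof (elim disjE conjE)
    assume h: "F = FlVal" "C1' = MCont [FunF v] (Fv c) (Suc c)"
    have "m_flag (MInt \<pi>' v' c) F (Some (MCont [FunF v'] (Fv c) (Suc c)))"
      using h by (auto intro: m_flag.intros)
    moreover have "SA C1' (MCont [FunF v'] (Fv c) (Suc c))"
      unfolding SA_def
      apply (rule exI[of _ "Suc c"], rule disjI1)
      apply (rule exI[of _ "Cont [FunF v] (Fv c)"], rule exI[of _ "Cont [FunF v'] (Fv c)"])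
      using h nb fv by auto
    ultimately show ?thesis by blast
  next
    assume h: "F = FlCtx" "C1' = MCont \<pi> (Fv c) (Suc c)"
    have "m_flag (MInt \<pi>' v' c) F (Some (MCont \<pi>' (Fv c) (Suc c)))"
      using h by (auto intro: m_flag.intros)
    moreover have "SA C1' (MCont \<pi>' (Fv c) (Suc c))"
      unfolding SA_def
      apply (rule exI[of _ "Suc c"], rule disjI1)
      apply (rule exI[of _ "Cont \<pi> (Fv c)"], rule exI[of _ "Cont \<pi>' (Fv c)"])
      using h nb fv by auto
    ultimately show ?thesis by blast
  qed
qed

lemma SA_bisim: "machine_bisim SA"
  unfolding machine_bisim_def
proof (intro conjI allI impI)
  show "symp SA"
  proof (rule sympI)
    fix x y assume "SA x y" then show "SA y x" unfolding SA_def using nfb_sym by blast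
  qed
next
  fix C1 C2 F D1 C1'
  assume a: "SA C1 C2" "m_tau\<^sup>*\<^sup>* C1 D1 \<and> m_flag D1 F (Some C1')"
  from a(1) obtain c where
    "(\<exists>A B. C1 = lift A c \<and> C2 = lift B c \<and> fv_ck A \<subseteq> {..<c} \<and> fv_ck B \<subseteq> {..<c}
      \<and> okc A \<and> okc B \<and> nf_bisimilar A B) \<or>
     (\<exists>\<pi> v \<pi>' v'. C1 = MInt \<pi> v c \<and> C2 = MInt \<pi>' v' c \<and> fv_stack \<pi> \<union> fv v \<subseteq> {..<c}
      \<and> fv_stack \<pi>' \<union> fv v' \<subseteq> {..<c} \<and> nf_bisimilar (Cont [FunF v] (Fv c)) (Cont [FunF v'] (Fv c))
      \<and> nf_bisimilar (Cont \<pi> (Fv c)) (Cont \<pi>' (Fv c)))" unfolding SA_def by blast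
  then show "\<exists>D2 C2'. m_tau\<^sup>*\<^sup>* C2 D2 \<and> m_flag D2 F (Some C2') \<and> SA C1' C2'"
  proof (elim disjE exE conjE)
    fix A B assume "C1 = lift A c" "C2 = lift B c" "fv_ck A \<subseteq> {..<c}" "fv_ck B \<subseteq> {..<c}"
      "okc A" "okc B" "nf_bisimilar A B"
    then show ?thesis using SA_lift_step a(2) by blast
  next
    fix \<pi> v \<pi>' v' assume "C1 = MInt \<pi> v c" "C2 = MInt \<pi>' v' c" "fv_stack \<pi> \<union> fv v \<subseteq> {..<c}"
      "fv_stack \<pi>' \<union> fv v' \<subseteq> {..<c}" "nf_bisimilar (Cont [FunF v] (Fv c)) (Cont [FunF v'] (Fv c))"
      "nf_bisimilar (Cont \<pi> (Fv c)) (Cont \<pi>' (Fv c))"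
    then show ?thesis using SA_int_step a(2) by blast
  qed
next
  fix C1 C2 F
  assume "\<exists>D1. m_tau\<^sup>*\<^sup>* C1 D1 \<and> m_flag D1 F None"
  then show "\<exists>D2. m_tau\<^sup>*\<^sup>* C2 D2 \<and> m_flag D2 F None" using flag_none by blast
qed

lemma dirA:
  assumes "nf_bisimilar A B" "okc A" "okc B" "fv_ck A \<subseteq> {..<c}" "fv_ck B \<subseteq> {..<c}"
  shows "machine_bisimilar (lift A c) (lift B c)"
proof -
  have "SA (lift A c) (lift B c)" unfolding SA_def using assms by blast
  then show ?thesis using SA_bisim unfolding machine_bisimilar_def by blast
qed


definition QB :: "ck \<Rightarrow> ck \<Rightarrow> bool" where
  "QB C C' \<longleftrightarrow> okc C \<and> okc C' \<and> (\<exists>c. fv_ck C \<subseteq> {..<c} \<and> fv_ck C' \<subseteq> {..<c} \<and>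
      machine_bisimilar (lift C c) (lift C' c))"

lemma QB_rename:
  assumes mb: "machine_bisimilar (MCont \<pi> (Fv c) (Suc c)) (MCont \<pi>' (Fv c) (Suc c))"
    and S: "fv_stack \<pi> \<union> fv_stack \<pi>' \<subseteq> S" "S \<subseteq> {..<c}" "f \<notin> S"
  shows "QB (Cont \<pi> (Fv f)) (Cont \<pi>' (Fv f))"
proof -
  obtain \<rho> where \<rho>: "good \<rho> (Suc c)" "\<rho> c = f" "\<forall>x\<in>S. \<rho> x = x" "c < \<rho> (Suc c)" "f < \<rho> (Suc c)"
    using rho_exists[OF S(2,3)] by blast
  have "machine_bisimilar (rnm \<rho> (MCont \<pi> (Fv c) (Suc c))) (rnm \<rho> (MCont \<pi>' (Fv c) (Suc c)))"
    using mb_rename[OF mb _ _ \<rho>(1)] by simp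
  moreover have "map (rnf \<rho>) \<pi> = \<pi>" "map (rnf \<rho>) \<pi>' = \<pi>'"
    using rns_fix \<rho>(3) S(1) by blast+
  ultimately have "machine_bisimilar (lift (Cont \<pi> (Fv f)) (\<rho> (Suc c))) (lift (Cont \<pi>' (Fv f)) (\<rho> (Suc c)))"
    using \<rho>(2) by simp
  moreover have "fv_ck (Cont \<pi> (Fv f)) \<subseteq> {..<\<rho> (Suc c)}" "fv_ck (Cont \<pi>' (Fv f)) \<subseteq> {..<\<rho> (Suc c)}"
    using S \<rho>(4,5) by auto
  ultimately show ?thesis unfolding QB_def by auto
qed

lemma QB_bisim: "nf_bisim QB"
  unfolding nf_bisim_def
proof (intro conjI allI impI)
  show "symp QB"
  proof (rule sympI)
    fix x y assume "QB x y" then show "QB y x" unfolding QB_def using mb_sym by blast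
  qed
next
  fix C C' v
  assume q: "QB C C'" and st: "ck_steps C (Cont [] v)"
  from q obtain c where c: "okc C" "okc C'" "fv_ck C \<subseteq> {..<c}" "fv_ck C' \<subseteq> {..<c}"
      "machine_bisimilar (lift C c) (lift C' c)" unfolding QB_def by blast
  have iv: "is_val v" using ok_steps[OF st c(1)] by simp
  have fvv: "fv v \<subseteq> {..<c}" using fv_steps[OF st] c(3) by auto
  have "m_tau\<^sup>*\<^sup>* (lift C c) (MCont [] v c)" using cks_push[OF st, of c] by simp
  moreover have "m_flag (MCont [] v c) FlLam (Some (MCont [FunF v] (Fv c) (Suc c)))"
    using iv by (rule m_flag.intros)
  ultimately obtain D2 C2' where D2: "m_tau\<^sup>*\<^sup>* (lift C' c) D2" "m_flag D2 FlLam (Some C2')"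
      "machine_bisimilar (MCont [FunF v] (Fv c) (Suc c)) C2'"
    using mb_step[OF c(5)] by blast
  obtain B where B: "D2 = lift B c" "ck_steps C' B" using cks_pull[OF D2(1)] by blast
  have "m_flag (lift B c) FlLam (Some C2')" using D2(2) B(1) by simp
  from flag_lift[OF this] obtain v' where v': "B = Cont [] v'" "C2' = MCont [FunF v'] (Fv c) (Suc c)"
    by auto
  have fvv': "fv v' \<subseteq> {..<c}" using fv_steps[OF B(2)] c(4) v' by auto
  show "\<exists>v'. ck_steps C' (Cont [] v') \<and>
           (\<forall>f. fresh_for f (Cont [] v) (Cont [] v') \<longrightarrow>
              QB (Cont [FunF v] (Fv f)) (Cont [FunF v'] (Fv f)))"
  proof (intro exI conjI allI impI)
    show "ck_steps C' (Cont [] v')" using B v' by simp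
  next
    fix f assume "fresh_for f (Cont [] v) (Cont [] v')"
    then have "f \<notin> fv v \<union> fv v'" unfolding fresh_for_def by simp
    then show "QB (Cont [FunF v] (Fv f)) (Cont [FunF v'] (Fv f))"
      using QB_rename[of "[FunF v]" c "[FunF v']" "fv v \<union> fv v'" f] D2(3) v' fvv fvv' by auto
  qed
next
  fix C C' f \<pi> v
  assume q: "QB C C'" and st: "ck_steps C (Cont (FunF (Fv f) # \<pi>) v)"
  from q obtain c where c: "okc C" "okc C'" "fv_ck C \<subseteq> {..<c}" "fv_ck C' \<subseteq> {..<c}"
      "machine_bisimilar (lift C c) (lift C' c)" unfolding QB_def by blast
  have iv: "is_val v" using ok_steps[OF st c(1)] by simp
  have fvv: "fv v \<union> fv_stack \<pi> \<subseteq> {..<c}" using fv_steps[OF st] c(3) by auto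
  have "m_tau\<^sup>*\<^sup>* (lift C c) (MCont (FunF (Fv f) # \<pi>) v c)" using cks_push[OF st, of c] by simp
  moreover have "m_flag (MCont (FunF (Fv f) # \<pi>) v c) (FlVar f) (Some (MInt \<pi> v c))"
    using iv by (rule m_flag.intros)
  ultimately obtain D2 C2' where D2: "m_tau\<^sup>*\<^sup>* (lift C' c) D2" "m_flag D2 (FlVar f) (Some C2')"
      "machine_bisimilar (MInt \<pi> v c) C2'"
    using mb_step[OF c(5)] by blast
  obtain B where B: "D2 = lift B c" "ck_steps C' B" using cks_pull[OF D2(1)] by blast
  have "m_flag (lift B c) (FlVar f) (Some C2')" using D2(2) B(1) by simp
  from flag_lift[OF this] obtain \<pi>' v' where v': "B = Cont (FunF (Fv f) # \<pi>') v'" "C2' = MInt \<pi>' v' c"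
    by auto
  have fvv': "fv v' \<union> fv_stack \<pi>' \<subseteq> {..<c}" using fv_steps[OF B(2)] c(4) v' by auto
  have mi: "machine_bisimilar (MInt \<pi> v c) (MInt \<pi>' v' c)" using D2(3) v' by simp
  have "m_flag (MInt \<pi> v c) FlVal (Some (MCont [FunF v] (Fv c) (Suc c)))" by (rule m_flag.intros)
  then obtain E1 Z1 where E1: "m_tau\<^sup>*\<^sup>* (MInt \<pi>' v' c) E1" "m_flag E1 FlVal (Some Z1)"
     "machine_bisimilar (MCont [FunF v] (Fv c) (Suc c)) Z1"
    using mb_step[OF mi rtranclp.rtrancl_refl] by blast
  have "m_flag (MInt \<pi>' v' c) FlVal (Some Z1)" using E1 taus_int[OF E1(1)] by simp
  then have Z1: "Z1 = MCont [FunF v'] (Fv c) (Suc c)" using flag_int by blast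
  have "m_flag (MInt \<pi> v c) FlCtx (Some (MCont \<pi> (Fv c) (Suc c)))" by (rule m_flag.intros)
  then obtain E2 Z2 where E2: "m_tau\<^sup>*\<^sup>* (MInt \<pi>' v' c) E2" "m_flag E2 FlCtx (Some Z2)"
     "machine_bisimilar (MCont \<pi> (Fv c) (Suc c)) Z2"
    using mb_step[OF mi rtranclp.rtrancl_refl] by blast
  have "m_flag (MInt \<pi>' v' c) FlCtx (Some Z2)" using E2 taus_int[OF E2(1)] by simp
  then have Z2: "Z2 = MCont \<pi>' (Fv c) (Suc c)" using flag_int by blast
  show "\<exists>\<pi>' v'. ck_steps C' (Cont (FunF (Fv f) # \<pi>') v') \<and>
           (\<forall>f'. fresh_for f' (Cont (FunF (Fv f) # \<pi>) v) (Cont (FunF (Fv f) # \<pi>') v') \<longrightarrow>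
              QB (Cont [FunF v] (Fv f')) (Cont [FunF v'] (Fv f')) \<and>
              QB (Cont \<pi> (Fv f')) (Cont \<pi>' (Fv f')))"
  proof (intro exI conjI allI impI)
    show "ck_steps C' (Cont (FunF (Fv f) # \<pi>') v')" using B v' by simp
  next
    fix f' assume "fresh_for f' (Cont (FunF (Fv f) # \<pi>) v) (Cont (FunF (Fv f) # \<pi>') v')"
    then have fr: "f' \<notin> fv v \<union> fv v' \<union> fv_stack \<pi> \<union> fv_stack \<pi>'" unfolding fresh_for_def by simp
    show "QB (Cont [FunF v] (Fv f')) (Cont [FunF v'] (Fv f'))"
      using QB_rename[of "[FunF v]" c "[FunF v']" "fv v \<union> fv v' \<union> fv_stack \<pi> \<union> fv_stack \<pi>'" f']
        E1(3) Z1 fvv fvv' fr by auto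
  next
    fix f' assume "fresh_for f' (Cont (FunF (Fv f) # \<pi>) v) (Cont (FunF (Fv f) # \<pi>') v')"
    then have fr: "f' \<notin> fv v \<union> fv v' \<union> fv_stack \<pi> \<union> fv_stack \<pi>'" unfolding fresh_for_def by simp
    show "QB (Cont \<pi> (Fv f')) (Cont \<pi>' (Fv f'))"
      using QB_rename[of \<pi> c \<pi>' "fv v \<union> fv v' \<union> fv_stack \<pi> \<union> fv_stack \<pi>'" f']
        E2(3) Z2 fvv fvv' fr by auto
  qed
qed

lemma finite_fv: "finite (fv t)"
  by (induction t) auto

theorem theorem6p3:
  assumes "wf_tm t" and "wf_tm s"
  shows "nf_equiv t s \<longleftrightarrow>
         (\<exists>n::nat. (\<forall>f\<in>fv t \<union> fv s. f < n) \<and> machine_bisimilar (MEv t [] n) (MEv s [] n))"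
proof
  assume h: "nf_equiv t s"
  have "finite (fv t \<union> fv s)" using finite_fv by simp
  then obtain n where n: "\<forall>f\<in>fv t \<union> fv s. f < n"
    by (meson finite_nat_set_iff_bounded)
  have "machine_bisimilar (lift (Ev t []) n) (lift (Ev s []) n)"
    using dirA[of "Ev t []" "Ev s []" n] h n unfolding nf_equiv_def by auto
  then show "\<exists>n::nat. (\<forall>f\<in>fv t \<union> fv s. f < n) \<and> machine_bisimilar (MEv t [] n) (MEv s [] n)"
    using n by auto
next
  assume "\<exists>n::nat. (\<forall>f\<in>fv t \<union> fv s. f < n) \<and> machine_bisimilar (MEv t [] n) (MEv s [] n)"
  then obtain n where n: "\<forall>f\<in>fv t \<union> fv s. f < n" "machine_bisimilar (MEv t [] n) (MEv s [] n)" by blast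
  have "QB (Ev t []) (Ev s [])" unfolding QB_def using n by (intro conjI exI[of _ n]) auto
  then show "nf_equiv t s" unfolding nf_equiv_def nf_bisimilar_def using QB_bisim by blast
qed

end
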